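(* Let $s=2$ and consider problem (P) in the context, which has the single variable $I_1=P_2$ (with $P_1=P_{\max}-P_2$). Then the optimal power allocation $(P_1^{**},P_2^{**})$ satisfies: 1. if $\alpha_1<\beta_1$, then $P_1^{**}=P_{\max}$ (so $P_2^{**}=0$); 2. if $h_2\beta_1<h_0\alpha_1$, then $P_2^{**}=P_{\max}$; 3. if $\alpha_1>\beta_1$ and $h_2\beta_1>h_0\alpha_1$, then $P_2^{**}=\min(r_1,P_{\max})$, where $r_1:=\frac{\alpha_1-\beta_1}{h_2\beta_1-h_0\alpha_1}$.
   Context: Parameters: - $P_{\max}>0$ and positive reals $h_0<h_1<h_2$. - Probabilities $\delta_0,\delta_1,\delta_2$ summing to $1$. - $\theta_1=\delta_0$, $\theta_2=\delta_0+\delta_1$, and $\Delta_k=\theta_k(1-\theta_k)$. - $\alpha_1:=(h_2-h_1)\Delta_2$ and $\beta_1:=(h_1-h_0)\Delta_1$. Problem (P). Over $P_1,P_2\ge0$ with $P_1+P_2=P_{\max}$, maximize $\Delta_1LR_1+\Delta_2LR_2$, where - $R_1=\frac12\big[\log\big(1+\frac{h_1P_1}{1+h_1P_2}\big)-\log\big(1+\frac{h_0P_1}{1+h_0P_2}\big)\big]$, - $R_2=\frac12\big[\log(1+h_2P_2)-\log(1+h_1P_2)\big]$. *)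

theory Defs
  imports Complex_Main
begin

text \<open>Rates of problem (P); log is the natural logarithm (the base only rescales the objective).\<close>

definition R1 :: "real \<Rightarrow> real \<Rightarrow> real \<Rightarrow> real \<Rightarrow> real" where
  "R1 h0 h1 P1 P2 = (1/2) * (ln (1 + h1 * P1 / (1 + h1 * P2)) - ln (1 + h0 * P1 / (1 + h0 * P2)))"

definition R2 :: "real \<Rightarrow> real \<Rightarrow> real \<Rightarrow> real" where
  "R2 h1 h2 P2 = (1/2) * (ln (1 + h2 * P2) - ln (1 + h1 * P2))"

definition Dlt :: "real \<Rightarrow> real" where
  "Dlt \<theta> = \<theta> * (1 - \<theta>)"

text \<open>Objective of (P): Delta_1 L R_1 + Delta_2 L R_2 with theta_1 = d0, theta_2 = d0 + d1.\<close>
definition objP :: "real \<Rightarrow> real \<Rightarrow> real \<Rightarrow> real \<Rightarrow> real \<Rightarrow> real \<Rightarrow> real \<Rightarrow> real \<Rightarrow> real" where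
  "objP L h0 h1 h2 d0 d1 P1 P2 =
     Dlt d0 * L * R1 h0 h1 P1 P2 + Dlt (d0 + d1) * L * R2 h1 h2 P2"

end

theory Submission
  imports Defs
begin

definition FF :: "real \<Rightarrow> real \<Rightarrow> real \<Rightarrow> real \<Rightarrow> real \<Rightarrow> real \<Rightarrow> real" where
  "FF h0 h1 h2 D1 D2 x = D1 * (ln (1 + h0*x) - ln (1 + h1*x)) + D2 * (ln (1 + h2*x) - ln (1 + h1*x))"

lemma FF_deriv:
  assumes "0 < h0" "h0 < h1" "h1 < h2" "0 \<le> x"
  shows "DERIV (FF h0 h1 h2 D1 D2) x :>
    ((D2*(h2-h1) - D1*(h1-h0)) + x*(h0*(D2*(h2-h1)) - h2*(D1*(h1-h0)))) / ((1+h0*x)*(1+h1*x)*(1+h2*x))"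
proof -
  have "0 \<le> h0*x" "0 \<le> h1*x" "0 \<le> h2*x" using assms by (simp_all add: less_imp_le)
  hence p0: "1+h0*x > 0" "1+h1*x > 0" "1+h2*x > 0" by linarith+
  have "DERIV (FF h0 h1 h2 D1 D2) x :> D1 * (h0/(1+h0*x) - h1/(1+h1*x)) + D2*(h2/(1+h2*x) - h1/(1+h1*x))"
    unfolding FF_def[abs_def] using p0
    by (auto intro!: derivative_eq_intros)
  moreover have "D1 * (h0/(1+h0*x) - h1/(1+h1*x)) + D2*(h2/(1+h2*x) - h1/(1+h1*x)) =
    ((D2*(h2-h1) - D1*(h1-h0)) + x*(h0*(D2*(h2-h1)) - h2*(D1*(h1-h0)))) / ((1+h0*x)*(1+h1*x)*(1+h2*x))"
  proof -
    have n: "(1+h0*x)*(1+h1*x) \<noteq> 0" "(1+h1*x)*(1+h2*x) \<noteq> 0" "(1+h0*x)*(1+h1*x)*(1+h2*x) \<noteq> 0"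
      using p0 by auto
    show ?thesis using p0 n by (simp add: divide_simps) (simp add: algebra_simps)
  qed
  ultimately show ?thesis by simp
qed

lemma den_pos:
  fixes h0 h1 h2 x :: real
  assumes "0 < h0" "h0 < h1" "h1 < h2" "0 \<le> x"
  shows "(1+h0*x)*(1+h1*x)*(1+h2*x) > 0"
proof -
  have "0 \<le> h0*x" "0 \<le> h1*x" "0 \<le> h2*x" using assms by (simp_all add: less_imp_le)
  hence p0: "1+h0*x > 0" "1+h1*x > 0" "1+h2*x > 0" by linarith+
  thus ?thesis by simp
qed

lemma FF_inc:
  assumes h: "0 < h0" "h0 < h1" "h1 < h2" and ab: "0 \<le> a" "a < b"
    and g: "\<And>x. a < x \<Longrightarrow> x < b \<Longrightarrow> (A + x*B) > (0::real)"
    and that: "A = D2*(h2-h1) - D1*(h1-h0)" "B = h0*(D2*(h2-h1)) - h2*(D1*(h1-h0))"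
  shows "FF h0 h1 h2 D1 D2 a < FF h0 h1 h2 D1 D2 b"
proof (rule DERIV_pos_imp_increasing_open[OF ab(2)])
  fix x assume x: "a < x" "x < b"
  show "\<exists>y. DERIV (FF h0 h1 h2 D1 D2) x :> y \<and> 0 < y"
    using FF_deriv[OF h, of x D1 D2] den_pos[OF h, of x] g[OF x] x ab that by auto
next
  show "continuous_on {a..b} (FF h0 h1 h2 D1 D2)"
  proof (rule DERIV_atLeastAtMost_imp_continuous_on)
    fix x assume "a \<le> x" "x \<le> b"
    hence "0 \<le> x" using ab by linarith
    thus "\<exists>y. DERIV (FF h0 h1 h2 D1 D2) x :> y" using FF_deriv[OF h, of x D1 D2] by blast
  qed
qed

lemma FF_dec:
  assumes h: "0 < h0" "h0 < h1" "h1 < h2" and ab: "0 \<le> a" "a < b"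
    and g: "\<And>x. a < x \<Longrightarrow> x < b \<Longrightarrow> (A + x*B) < (0::real)"
    and that: "A = D2*(h2-h1) - D1*(h1-h0)" "B = h0*(D2*(h2-h1)) - h2*(D1*(h1-h0))"
  shows "FF h0 h1 h2 D1 D2 a > FF h0 h1 h2 D1 D2 b"
proof (rule DERIV_neg_imp_decreasing_open[OF ab(2)])
  fix x assume x: "a < x" "x < b"
  have "A + x*B < 0" using g[OF x] .
  then have "(A + x*B) / ((1+h0*x)*(1+h1*x)*(1+h2*x)) < 0"
    using den_pos[OF h, of x] x ab by (simp add: divide_neg_pos)
  then show "\<exists>y. DERIV (FF h0 h1 h2 D1 D2) x :> y \<and> y < 0"
    using FF_deriv[OF h, of x D1 D2] x ab that by auto
next
  show "continuous_on {a..b} (FF h0 h1 h2 D1 D2)"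
  proof (rule DERIV_atLeastAtMost_imp_continuous_on)
    fix x assume "a \<le> x" "x \<le> b"
    hence "0 \<le> x" using ab by linarith
    thus "\<exists>y. DERIV (FF h0 h1 h2 D1 D2) x :> y" using FF_deriv[OF h, of x D1 D2] by blast
  qed
qed

lemma obj_eq:
  assumes "0 < h0" "h0 < h1" "h1 < h2" "0 \<le> x" "x \<le> Pmax"
  shows "objP L h0 h1 h2 d0 d1 (Pmax - x) x =
     L/2 * (Dlt d0 * (ln (1+h1*Pmax) - ln (1+h0*Pmax))) + L/2 * FF h0 h1 h2 (Dlt d0) (Dlt (d0+d1)) x"
proof -
  have "0 \<le> h0*x" "0 \<le> h1*x" "0 \<le> h2*x" using assms by (simp_all add: less_imp_le)
  hence p0: "1+h0*x > 0" "1+h1*x > 0" "1+h2*x > 0" by linarith+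
  have q: "1+h0*Pmax > 0" "1+h1*Pmax > 0" using assms by (auto intro: add_pos_nonneg)
  have e1: "1 + h1*(Pmax-x)/(1+h1*x) = (1+h1*Pmax)/(1+h1*x)" using p0 by (simp add: field_simps)
  have e0: "1 + h0*(Pmax-x)/(1+h0*x) = (1+h0*Pmax)/(1+h0*x)" using p0 by (simp add: field_simps)
  show ?thesis
    unfolding objP_def R1_def R2_def FF_def e1 e0 using p0 q
    by (simp add: ln_div algebra_simps)
qed

theorem lemma2:
  fixes Pmax L h0 h1 h2 d0 d1 d2 P2 :: real
  assumes "Pmax > 0" and "L > 0"
    and "0 < h0" and "h0 < h1" and "h1 < h2"
    and "d0 \<ge> 0" and "d1 \<ge> 0" and "d2 \<ge> 0" and "d0 + d1 + d2 = 1"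
    and opt_feas: "0 \<le> P2" "P2 \<le> Pmax"
    and opt_max: "\<forall>x. 0 \<le> x \<and> x \<le> Pmax \<longrightarrow>
        objP L h0 h1 h2 d0 d1 (Pmax - x) x \<le> objP L h0 h1 h2 d0 d1 (Pmax - P2) P2"
  defines "\<alpha>1 \<equiv> (h2 - h1) * Dlt (d0 + d1)"
    and "\<beta>1 \<equiv> (h1 - h0) * Dlt d0"
  shows "(\<alpha>1 < \<beta>1 \<longrightarrow> Pmax - P2 = Pmax \<and> P2 = 0)
       \<and> (h2 * \<beta>1 < h0 * \<alpha>1 \<longrightarrow> P2 = Pmax)
       \<and> (\<alpha>1 > \<beta>1 \<and> h2 * \<beta>1 > h0 * \<alpha>1 \<longrightarrow>
            P2 = min ((\<alpha>1 - \<beta>1) / (h2 * \<beta>1 - h0 * \<alpha>1)) Pmax)"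
proof -
  note h = assms(3,4,5)
  define F where "F = FF h0 h1 h2 (Dlt d0) (Dlt (d0+d1))"
  define A where "A = Dlt (d0+d1)*(h2-h1) - Dlt d0*(h1-h0)"
  define B where "B = h0*(Dlt (d0+d1)*(h2-h1)) - h2*(Dlt d0*(h1-h0))"
  have AB: "A = \<alpha>1 - \<beta>1" "B = h0*\<alpha>1 - h2*\<beta>1" unfolding A_def B_def \<alpha>1_def \<beta>1_def by (auto simp: algebra_simps)
  have D0: "Dlt d0 \<ge> 0" "Dlt (d0+d1) \<ge> 0" unfolding Dlt_def using assms(6-9) by auto
  have a0: "\<alpha>1 \<ge> 0" "\<beta>1 \<ge> 0" unfolding \<alpha>1_def \<beta>1_def using D0 h by auto
  have opt: "F x \<le> F P2" if "0 \<le> x" "x \<le> Pmax" for x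
  proof -
    have "objP L h0 h1 h2 d0 d1 (Pmax - x) x \<le> objP L h0 h1 h2 d0 d1 (Pmax - P2) P2"
      using opt_max that by auto
    then show ?thesis unfolding obj_eq[OF h that] obj_eq[OF h opt_feas] F_def using assms(2) by simp
  qed
  have inc: "F a < F b" if "0 \<le> a" "a < b" "\<And>x. a < x \<Longrightarrow> x < b \<Longrightarrow> A + x*B > 0" for a b
    unfolding F_def by (rule FF_inc[OF h that(1,2), of A B]) (use that(3) in \<open>auto simp: A_def B_def\<close>)
  have dec: "F a > F b" if "0 \<le> a" "a < b" "\<And>x. a < x \<Longrightarrow> x < b \<Longrightarrow> A + x*B < 0" for a b
    unfolding F_def by (rule FF_dec[OF h that(1,2), of A B]) (use that(3) in \<open>auto simp: A_def B_def\<close>)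
  have c1: "P2 = 0" if "\<alpha>1 < \<beta>1"
  proof (rule ccontr)
    assume "P2 \<noteq> 0"
    hence "0 < P2" using opt_feas by auto
    have "h0*\<alpha>1 \<le> h2*\<beta>1" using that a0 h
      by (meson less_eq_real_def mult_mono order_trans less_imp_le)
    hence "F 0 > F P2"
    proof (intro dec[OF order_refl \<open>0<P2\<close>])
      fix x :: real assume "0 < x" "x < P2"
      have "x*(h0*\<alpha>1 - h2*\<beta>1) \<le> 0" using \<open>0<x\<close> \<open>h0*\<alpha>1 \<le> h2*\<beta>1\<close> by (intro mult_nonneg_nonpos) auto
      thus "A + x*B < 0" unfolding AB using that by linarith
    qed
    with opt[of 0] opt_feas show False by auto
  qed
  have c2: "P2 = Pmax" if "h2*\<beta>1 < h0*\<alpha>1"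
  proof (rule ccontr)
    assume "P2 \<noteq> Pmax"
    hence "P2 < Pmax" using opt_feas by auto
    have "h0*\<beta>1 \<le> h2*\<beta>1" using a0 h by (intro mult_right_mono) auto
    hence "\<beta>1 < \<alpha>1" using that h by (smt (verit) mult_le_cancel_left_pos)
    hence "F P2 < F Pmax"
    proof (intro inc[OF opt_feas(1) \<open>P2 < Pmax\<close>])
      fix x :: real assume "P2 < x" "x < Pmax"
      hence "0 \<le> x" using opt_feas by linarith
      have "x*(h0*\<alpha>1 - h2*\<beta>1) \<ge> 0" using \<open>0\<le>x\<close> that by (intro mult_nonneg_nonneg) auto
      thus "A + x*B > 0" unfolding AB using \<open>\<beta>1 < \<alpha>1\<close> by linarith
    qed
    with opt[of Pmax] assms(1) show False by auto
  qed
  have c3: "P2 = min ((\<alpha>1 - \<beta>1) / (h2 * \<beta>1 - h0 * \<alpha>1)) Pmax" if "\<alpha>1 > \<beta>1" "h2 * \<beta>1 > h0 * \<alpha>1"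
  proof -
    define r where "r = (\<alpha>1 - \<beta>1) / (h2 * \<beta>1 - h0 * \<alpha>1)"
    have rp: "r > 0" unfolding r_def using that by auto
    have pos: "A + x*B > 0" if "x < r" for x
    proof -
      have "x * (h2 * \<beta>1 - h0 * \<alpha>1) < \<alpha>1 - \<beta>1"
        using that \<open>h2 * \<beta>1 > h0 * \<alpha>1\<close> unfolding r_def by (simp add: pos_less_divide_eq)
      thus ?thesis unfolding AB by (simp add: algebra_simps)
    qed
    have neg: "A + x*B < 0" if "x > r" for x
    proof -
      have "x * (h2 * \<beta>1 - h0 * \<alpha>1) > \<alpha>1 - \<beta>1"
        using that \<open>h2 * \<beta>1 > h0 * \<alpha>1\<close> unfolding r_def by (simp add: pos_divide_less_eq)
      thus ?thesis unfolding AB by (simp add: algebra_simps)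
    qed
    define m where "m = min r Pmax"
    have m: "0 \<le> m" "m \<le> Pmax" "m \<le> r" using rp assms(1) unfolding m_def by auto
    show ?thesis unfolding r_def[symmetric] m_def[symmetric]
    proof (rule ccontr)
      assume "P2 \<noteq> m"
      then consider "P2 < m" | "P2 > m" by linarith
      then show False
      proof cases
        case 1
        have "F P2 < F m" by (rule inc[OF opt_feas(1) 1]) (use m pos in auto)
        with opt[of m] m show False by auto
      next
        case 2
        hence "m = r" using opt_feas unfolding m_def by auto
        have "F m > F P2" by (rule dec[OF m(1) 2]) (use \<open>m = r\<close> neg in auto)
        with opt[of m] m show False by auto
      qed
    qed
  qed
  show ?thesis using c1 c2 c3 by auto
qed

end
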